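(* Let $(\mathbb{F}_t)_{t\in\mathbb{N}}$ be a filtration on $\mathcal{E}$ with ranges $\mathcal{F}_t$, let $(X^{(i)}_t)_{t\in\mathbb{N}}$, $i=1,\dots,n$, be martingales with respect to $(\mathbb{F}_t)$, and let $g:\mathbb{R}^n\to\mathbb{R}$ be a continuous convex function. Write $\mathbf{X}_t=(X^{(1)}_t,\dots,X^{(n)}_t)$. If $g(\mathbf{X}_t)\in\mathcal{E}$ for all $t$, then $(g(\mathbf{X}_t))_{t\in\mathbb{N}}$ is a sub-martingale with respect to $(\mathbb{F}_t)$.
   Context: Let $\mathcal{E}$ be an order complete vector lattice with a weak order unit $E$, $K$ its Stone space, and $C^\infty(K)$ the vector lattice of continuous functions $K\to[-\infty,\infty]$ finite off a nowhere dense set (identified when equal off a nowhere dense set), the universal completion of $\mathcal{E}$. Fix a Maeda–Ogasawara representation of $\mathcal{E}$ as an order dense ideal of $C^\infty(K)$ with $E$ corresponding to $\mathbf{1}$. For continuous $g:\mathbb{R}^n\to\mathbb{R}$ and $X_1,\dots,X_n\in C^\infty(K)$, $g(X_1,\dots,X_n)$ denotes the unique element of $C^\infty(K)$ agreeing with $\omega\mapsto g(X_1(\omega),\dots,X_n(\omega))$ on the open dense set where all $X_i$ are finite. A conditional expectation on $\mathcal{E}$ is an order continuous, strictly positive linear projection $\mathbb{F}:\mathcal{E}\to\mathcal{E}$ whose range is an order complete vector sublattice of $\mathcal{E}$ and with $\mathbb{F}E=E$. A filtration is a family $(\mathbb{F}_t)$ of conditional expectations with $\mathbb{F}_s=\mathbb{F}_s\mathbb{F}_t=\mathbb{F}_t\mathbb{F}_s$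 for $s\le t$; $\mathcal{F}_t$ is the range of $\mathbb{F}_t$. A process $(X_t)$ in $\mathcal{E}$ is adapted if $X_t\in\mathcal{F}_t$ for all $t$; an adapted process is a sub-martingale if $\mathbb{F}_t(X_s)\ge X_t$ for all $t\le s$, a super-martingale if $\mathbb{F}_t(X_s)\le X_t$ for all $t\le s$, and a martingale if both hold. *)

theory Defs
  imports "HOL-Analysis.Analysis"
begin

text \<open>The Stone space K is modelled by a type 'k. Elements of the universal
completion C^infinity(K) are represented by continuous functions 'k => ereal
that are finite off a nowhere dense set. Since two continuous ereal-valued
functions that agree off a nowhere dense set agree everywhere (the set where
they differ is open), the identification modulo nowhere dense sets is trivial
and every class has exactly one representative.\<close>

definition Cinf :: "('k::topological_space \<Rightarrow> ereal) set" where
  "Cinf = {f. continuous_on UNIV f \<and> interior (closure {w. \<bar>f w\<bar> = \<infinity>}) = {}}"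

definition stonean_space :: "'k::t2_space itself \<Rightarrow> bool" where
  "stonean_space _ \<longleftrightarrow> compact (UNIV :: 'k set) \<and>
     (\<forall>U::'k set. open U \<longrightarrow> open (closure U))"

text \<open>Vector operations of C^infinity(K): the unique element agreeing with the
pointwise operation on the dense open set where all arguments are finite.\<close>
definition cadd :: "('k::topological_space \<Rightarrow> ereal) \<Rightarrow> ('k \<Rightarrow> ereal) \<Rightarrow> 'k \<Rightarrow> ereal" where
  "cadd X Y = (THE Z. Z \<in> Cinf \<and>
     (\<forall>w. \<bar>X w\<bar> \<noteq> \<infinity> \<and> \<bar>Y w\<bar> \<noteq> \<infinity> \<longrightarrow> Z w = X w + Y w))"

definition cscale :: "real \<Rightarrow> ('k::topological_space \<Rightarrow> ereal) \<Rightarrow> 'k \<Rightarrow> ereal" where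
  "cscale c X = (THE Z. Z \<in> Cinf \<and>
     (\<forall>w. \<bar>X w\<bar> \<noteq> \<infinity> \<longrightarrow> Z w = ereal c * X w))"

definition fcalc :: "(real^'n \<Rightarrow> real) \<Rightarrow> ('n \<Rightarrow> 'k::topological_space \<Rightarrow> ereal) \<Rightarrow> 'k \<Rightarrow> ereal" where
  "fcalc g Xs = (THE Y. Y \<in> Cinf \<and>
     (\<forall>w. (\<forall>i. \<bar>Xs i w\<bar> \<noteq> \<infinity>) \<longrightarrow> Y w = ereal (g (\<chi> i. real_of_ereal (Xs i w)))))"

text \<open>E is an order dense ideal of C^infinity(K) containing the constant 1
(Maeda--Ogasawara representation with E corresponding to 1).\<close>
definition MO_space :: "('k::t2_space \<Rightarrow> ereal) set \<Rightarrow> bool" where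
  "MO_space E \<longleftrightarrow> stonean_space TYPE('k) \<and> E \<subseteq> Cinf \<and>
     (\<lambda>_. 0) \<in> E \<and> (\<lambda>_. 1) \<in> E \<and>
     (\<forall>X\<in>E. \<forall>Y\<in>E. cadd X Y \<in> E) \<and>
     (\<forall>c. \<forall>X\<in>E. cscale c X \<in> E) \<and>
     (\<forall>X\<in>E. \<forall>Y\<in>Cinf. (\<forall>w. \<bar>Y w\<bar> \<le> \<bar>X w\<bar>) \<longrightarrow> Y \<in> E) \<and>
     (\<forall>Y\<in>Cinf. (\<lambda>_. 0) \<le> Y \<and> Y \<noteq> (\<lambda>_. 0) \<longrightarrow>
        (\<exists>X\<in>E. (\<lambda>_. 0) \<le> X \<and> X \<noteq> (\<lambda>_. 0) \<and> X \<le> Y))"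

definition is_inf_in :: "('a::order) set \<Rightarrow> 'a set \<Rightarrow> 'a \<Rightarrow> bool" where
  "is_inf_in S D x \<longleftrightarrow> x \<in> S \<and> (\<forall>d\<in>D. x \<le> d) \<and> (\<forall>y\<in>S. (\<forall>d\<in>D. y \<le> d) \<longrightarrow> y \<le> x)"

definition is_sup_in :: "('a::order) set \<Rightarrow> 'a set \<Rightarrow> 'a \<Rightarrow> bool" where
  "is_sup_in S D x \<longleftrightarrow> x \<in> S \<and> (\<forall>d\<in>D. d \<le> x) \<and> (\<forall>y\<in>S. (\<forall>d\<in>D. d \<le> y) \<longrightarrow> x \<le> y)"

definition order_continuous_on :: "('k::t2_space \<Rightarrow> ereal) set \<Rightarrow> (('k \<Rightarrow> ereal) \<Rightarrow> ('k \<Rightarrow> ereal)) \<Rightarrow> bool" where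
  "order_continuous_on E F \<longleftrightarrow>
     (\<forall>D. D \<subseteq> E \<and> D \<noteq> {} \<and> (\<forall>a\<in>D. \<forall>b\<in>D. \<exists>c\<in>D. c \<le> a \<and> c \<le> b) \<and>
          is_inf_in E D (\<lambda>_. 0) \<longrightarrow> is_inf_in E (F ` D) (\<lambda>_. 0))"

definition order_complete_sublattice :: "('k::t2_space \<Rightarrow> ereal) set \<Rightarrow> ('k \<Rightarrow> ereal) set \<Rightarrow> bool" where
  "order_complete_sublattice E R \<longleftrightarrow> R \<subseteq> E \<and> (\<lambda>_. 0) \<in> R \<and>
     (\<forall>X\<in>R. \<forall>Y\<in>R. cadd X Y \<in> R) \<and> (\<forall>c. \<forall>X\<in>R. cscale c X \<in> R) \<and>
     (\<forall>X\<in>R. \<forall>Y\<in>R. sup X Y \<in> R \<and> inf X Y \<in> R) \<and>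
     (\<forall>D. D \<subseteq> R \<and> D \<noteq> {} \<and> (\<exists>b\<in>R. \<forall>d\<in>D. d \<le> b) \<longrightarrow> (\<exists>s. is_sup_in R D s))"

definition cond_exp :: "('k::t2_space \<Rightarrow> ereal) set \<Rightarrow> (('k \<Rightarrow> ereal) \<Rightarrow> ('k \<Rightarrow> ereal)) \<Rightarrow> bool" where
  "cond_exp E F \<longleftrightarrow>
     (\<forall>X\<in>E. F X \<in> E) \<and>
     (\<forall>X\<in>E. \<forall>Y\<in>E. F (cadd X Y) = cadd (F X) (F Y)) \<and>
     (\<forall>c. \<forall>X\<in>E. F (cscale c X) = cscale c (F X)) \<and>
     (\<forall>X\<in>E. (\<lambda>_. 0) \<le> X \<and> X \<noteq> (\<lambda>_. 0) \<longrightarrow> (\<lambda>_. 0) \<le> F X \<and> F X \<noteq> (\<lambda>_. 0)) \<and>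
     (\<forall>X\<in>E. (\<lambda>_. 0) \<le> X \<longrightarrow> (\<lambda>_. 0) \<le> F X) \<and>
     (\<forall>X\<in>E. F (F X) = F X) \<and>
     order_continuous_on E F \<and>
     order_complete_sublattice E (F ` E) \<and>
     F (\<lambda>_. 1) = (\<lambda>_. 1)"

definition filtration :: "('k::t2_space \<Rightarrow> ereal) set \<Rightarrow> (nat \<Rightarrow> ('k \<Rightarrow> ereal) \<Rightarrow> ('k \<Rightarrow> ereal)) \<Rightarrow> bool" where
  "filtration E FF \<longleftrightarrow> (\<forall>t. cond_exp E (FF t)) \<and>
     (\<forall>s t. s \<le> t \<longrightarrow> (\<forall>X\<in>E. FF s X = FF s (FF t X) \<and> FF s X = FF t (FF s X)))"

definition adapted :: "('k::t2_space \<Rightarrow> ereal) set \<Rightarrow> (nat \<Rightarrow> ('k \<Rightarrow> ereal) \<Rightarrow> ('k \<Rightarrow> ereal)) \<Rightarrow> (nat \<Rightarrow> 'k \<Rightarrow> ereal) \<Rightarrow> bool" where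
  "adapted E FF X \<longleftrightarrow> (\<forall>t. X t \<in> E \<and> X t \<in> FF t ` E)"

definition submartingale where
  "submartingale E FF X \<longleftrightarrow> adapted E FF X \<and> (\<forall>t s. t \<le> s \<longrightarrow> X t \<le> FF t (X s))"

definition supermartingale where
  "supermartingale E FF X \<longleftrightarrow> adapted E FF X \<and> (\<forall>t s. t \<le> s \<longrightarrow> FF t (X s) \<le> X t)"

definition martingale where
  "martingale E FF X \<longleftrightarrow> submartingale E FF X \<and> supermartingale E FF X"

end

theory Submission
  imports Defs
begin


lemma dense_Int2:
  fixes A B :: "'k::topological_space set"
  assumes "open A" "closure A = UNIV" "closure B = UNIV"
  shows "closure (A \<inter> B) = UNIV"
  using closure_open_Int_superset[of A B] assms by auto

lemma dense_INT:
  fixes S :: "'i \<Rightarrow> 'k::topological_space set"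
  assumes "finite I" "\<And>i. i \<in> I \<Longrightarrow> open (S i) \<and> closure (S i) = UNIV"
  shows "open (\<Inter>i\<in>I. S i) \<and> closure (\<Inter>i\<in>I. S i) = UNIV"
  using assms
proof (induction I rule: finite_induct)
  case empty then show ?case by simp
next
  case (insert x F)
  then have a: "open (S x)" "closure (S x) = UNIV" and b: "open (\<Inter>i\<in>F. S i)" "closure (\<Inter>i\<in>F. S i) = UNIV"
    by auto
  have "closure (S x \<inter> (\<Inter>i\<in>F. S i)) = UNIV" using dense_Int2[OF a b(2)] .
  then show ?case using a b by auto
qed

lemma Cinf_fin:
  assumes "X \<in> Cinf"
  shows "open {w. \<bar>X w\<bar> \<noteq> \<infinity>} \<and> closure {w. \<bar>X w\<bar> \<noteq> \<infinity>} = UNIV"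
proof -
  have c: "continuous_on UNIV X" and i: "interior (closure {w. \<bar>X w\<bar> = \<infinity>}) = {}"
    using assms by (auto simp: Cinf_def)
  have "{w. \<bar>X w\<bar> = \<infinity>} = X -` {\<infinity>, -\<infinity>}" by auto
  moreover have "closed (X -` {\<infinity>, -\<infinity>})"
    using continuous_on_closed_vimage[of UNIV X] c by auto
  ultimately have cl: "closed {w. \<bar>X w\<bar> = \<infinity>}" by simp
  have e: "{w. \<bar>X w\<bar> \<noteq> \<infinity>} = - {w. \<bar>X w\<bar> = \<infinity>}" by auto
  have "closure {w. \<bar>X w\<bar> = \<infinity>} = {w. \<bar>X w\<bar> = \<infinity>}" using cl by (rule closure_closed)
  then have "interior {w. \<bar>X w\<bar> = \<infinity>} = {}" using i by simp
  then show ?thesis using cl unfolding e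
    by (simp add: closure_interior open_Compl del: closure_closed)
qed

lemma cont_eq_dense:
  fixes Z1 Z2 :: "'k::topological_space \<Rightarrow> 'b::t2_space"
  assumes "continuous_on UNIV Z1" "continuous_on UNIV Z2" "closure U = UNIV" "\<And>w. w \<in> U \<Longrightarrow> Z1 w = Z2 w"
  shows "Z1 = Z2"
proof -
  have "closed {x. Z1 x = Z2 x}" using closed_Collect_eq[OF assms(1,2)] .
  moreover have "U \<subseteq> {x. Z1 x = Z2 x}" using assms(4) by auto
  ultimately have "closure U \<subseteq> {x. Z1 x = Z2 x}" by (rule closure_minimal[rotated])
  then show ?thesis using assms(3) by auto
qed

lemma cont_le_dense:
  fixes Z1 Z2 :: "'k::topological_space \<Rightarrow> 'b::linorder_topology"
  assumes "continuous_on UNIV Z1" "continuous_on UNIV Z2" "closure U = UNIV" "\<And>w. w \<in> U \<Longrightarrow> Z1 w \<le> Z2 w"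
  shows "Z1 \<le> Z2"
proof -
  have "closed {x. Z1 x \<le> Z2 x}" using closed_Collect_le[OF assms(1,2)] .
  moreover have "U \<subseteq> {x. Z1 x \<le> Z2 x}" using assms(4) by auto
  ultimately have "closure U \<subseteq> {x. Z1 x \<le> Z2 x}" by (rule closure_minimal[rotated])
  then show ?thesis using assms(3) by (auto simp: le_fun_def)
qed

lemma Cinf_I:
  fixes Z :: "'k::topological_space \<Rightarrow> ereal"
  assumes "continuous_on UNIV Z" "open U" "closure U = UNIV" "\<And>w. w \<in> U \<Longrightarrow> \<bar>Z w\<bar> \<noteq> \<infinity>"
  shows "Z \<in> Cinf"
proof -
  have "{w. \<bar>Z w\<bar> = \<infinity>} \<subseteq> - U" proof (rule subsetI) fix w assume "w \<in> {w. \<bar>Z w\<bar> = \<infinity>}" then show "w \<in> - U" using assms(4)[of w] by auto qed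
  then have "closure {w. \<bar>Z w\<bar> = \<infinity>} \<subseteq> - U"
    using assms(2) by (simp add: closure_minimal open_closed)
  then have "interior (closure {w. \<bar>Z w\<bar> = \<infinity>}) \<subseteq> interior (- U)" by (rule interior_mono)
  also have "interior (- U) = {}" using assms(3) by (simp add: interior_closure)
  finally show ?thesis using assms(1) by (auto simp: Cinf_def)
qed

lemma stonean_ext:
  fixes h :: "'k::t2_space \<Rightarrow> real"
  assumes st: "stonean_space TYPE('k)" and U: "open U" and hc: "continuous_on U h"
  shows "\<exists>Z. continuous_on UNIV Z \<and> (\<forall>w\<in>U. Z w = ereal (h w))"
proof -
  define A where "A q = {w\<in>U. h w < q}" for q
  define B where "B q = closure (A q)" for q
  define H where "H w = Inf (ereal ` {q. w \<in> B q})" for w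
  have Aopen: "open (A q)" for q
  proof -
    have "A q = h -` {..<q} \<inter> U" by (auto simp: A_def)
    then show ?thesis using hc U by (simp add: continuous_on_open_vimage)
  qed
  have Bopen: "open (B q)" for q using st Aopen unfolding stonean_space_def B_def by blast
  have Bmono: "q \<le> q' \<Longrightarrow> B q \<subseteq> B q'" for q q'
    unfolding B_def by (rule closure_mono) (auto simp: A_def)
  have ii: "H w < a \<longleftrightarrow> (\<exists>q. w \<in> B q \<and> ereal q < a)" for w a
    unfolding H_def by (auto simp: Inf_less_iff)
  have iii: "a < H w \<longleftrightarrow> (\<exists>q. a < ereal q \<and> w \<notin> B q)" for w a
  proof
    assume "a < H w"
    then obtain q where q: "a < ereal q" "ereal q < H w" using ereal_dense2 by blast
    have "w \<notin> B q"
    proof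
      assume "w \<in> B q"
      then have "H w \<le> ereal q" unfolding H_def by (auto intro: Inf_lower)
      then show False using q by simp
    qed
    then show "\<exists>q. a < ereal q \<and> w \<notin> B q" using q by blast
  next
    assume "\<exists>q. a < ereal q \<and> w \<notin> B q"
    then obtain q where q: "a < ereal q" "w \<notin> B q" by blast
    have "ereal q \<le> H w" unfolding H_def
    proof (rule Inf_greatest)
      fix x assume "x \<in> ereal ` {q. w \<in> B q}"
      then obtain q' where "x = ereal q'" "w \<in> B q'" by auto
      then show "ereal q \<le> x" using Bmono[of q' q] q(2) by (cases "q' \<le> q") auto
    qed
    then show "a < H w" using q by simp
  qed
  have cont: "continuous_on UNIV H"
  proof (rule continuous_on_generate_topology[OF open_generated_order], safe)
    fix a
    have "H -` {..<a} = (\<Union>q\<in>{q. ereal q < a}. B q)" using ii by auto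
    then have "open (H -` {..<a})" using Bopen by auto
    then show "\<exists>C. open C \<and> C \<inter> UNIV = H -` {..<a} \<inter> UNIV" by auto
  next
    fix a
    have "H -` {a<..} = (\<Union>q\<in>{q. a < ereal q}. - B q)" using iii by auto
    moreover have "closed (B q)" for q unfolding B_def by simp
    ultimately have "open (H -` {a<..})" by (auto simp: open_Compl)
    then show "\<exists>C. open C \<and> C \<inter> UNIV = H -` {a<..} \<inter> UNIV" by auto
  qed
  have agree: "H w = ereal (h w)" if w: "w \<in> U" for w
  proof (rule antisym)
    show "H w \<le> ereal (h w)"
    proof (rule ccontr)
      assume "\<not> H w \<le> ereal (h w)"
      then have "ereal (h w) < H w" by simp
      then obtain q where q: "ereal (h w) < ereal q" "w \<notin> B q" using iii by blast
      have "w \<in> A q" using q w by (auto simp: A_def)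
      then have "w \<in> B q" unfolding B_def using closure_subset by blast
      then show False using q by simp
    qed
  next
    show "ereal (h w) \<le> H w"
    proof (rule ccontr)
      assume "\<not> ereal (h w) \<le> H w"
      then have "H w < ereal (h w)" by simp
      then obtain q where q: "w \<in> B q" "ereal q < ereal (h w)" using ii by blast
      define N where "N = h -` {q<..} \<inter> U"
      have "open N" using hc U by (simp add: continuous_on_open_vimage N_def)
      moreover have "N \<inter> A q = {}" by (auto simp: N_def A_def)
      ultimately have "N \<inter> B q = {}" unfolding B_def using open_Int_closure_eq_empty by blast
      moreover have "w \<in> N" using q w by (auto simp: N_def)
      ultimately show False using q by blast
    qed
  qed
  show ?thesis using cont agree by blast
qed

lemma ex1_Cinf:
  fixes h :: "'k::t2_space \<Rightarrow> real"
  assumes st: "stonean_space TYPE('k)" and U: "open U" "closure U = UNIV" and hc: "continuous_on U h"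
  shows "\<exists>!Z. Z \<in> Cinf \<and> (\<forall>w\<in>U. Z w = ereal (h w))"
proof -
  obtain Z where Z: "continuous_on UNIV Z" "\<forall>w\<in>U. Z w = ereal (h w)"
    using stonean_ext[OF st U(1) hc] by blast
  have "Z \<in> Cinf" using Z U by (intro Cinf_I[of Z U]) auto
  moreover have "Z' = Z" if "Z' \<in> Cinf" "\<forall>w\<in>U. Z' w = ereal (h w)" for Z'
    using that Z U(2) by (intro cont_eq_dense[of Z' Z U]) (auto simp: Cinf_def)
  ultimately show ?thesis using Z by blast
qed

lemma cont_roe:
  assumes "X \<in> Cinf" "U \<subseteq> {w. \<bar>X w\<bar> \<noteq> \<infinity>}"
  shows "continuous_on U (\<lambda>w. real_of_ereal (X w))"
proof (rule continuous_on_compose2[of "{x::ereal. \<bar>x\<bar> \<noteq> \<infinity>}" real_of_ereal U X])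
  show "continuous_on {x::ereal. \<bar>x\<bar> \<noteq> \<infinity>} real_of_ereal"
    by (rule continuous_at_imp_continuous_on) (auto intro: continuous_at_of_ereal)
  show "continuous_on U X" using assms(1) by (auto simp: Cinf_def intro: continuous_on_subset)
  show "X ` U \<subseteq> {x. \<bar>x\<bar> \<noteq> \<infinity>}" using assms(2) by auto
qed

lemma cadd_spec:
  fixes X Y :: "'k::t2_space \<Rightarrow> ereal"
  assumes st: "stonean_space TYPE('k)" and X: "X \<in> Cinf" and Y: "Y \<in> Cinf"
  shows "cadd X Y \<in> Cinf \<and> (\<forall>w. \<bar>X w\<bar> \<noteq> \<infinity> \<and> \<bar>Y w\<bar> \<noteq> \<infinity> \<longrightarrow> cadd X Y w = X w + Y w)"
proof -
  define U where "U = {w. \<bar>X w\<bar> \<noteq> \<infinity>} \<inter> {w. \<bar>Y w\<bar> \<noteq> \<infinity>}"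
  define h where "h w = real_of_ereal (X w) + real_of_ereal (Y w)" for w
  have U: "open U" "closure U = UNIV" using Cinf_fin[OF X] Cinf_fin[OF Y] dense_Int2 unfolding U_def by auto
  have hc: "continuous_on U h" unfolding h_def
    by (intro continuous_on_add cont_roe[OF X] cont_roe[OF Y]) (auto simp: U_def)
  have eq: "(\<lambda>Z. Z \<in> Cinf \<and> (\<forall>w. \<bar>X w\<bar> \<noteq> \<infinity> \<and> \<bar>Y w\<bar> \<noteq> \<infinity> \<longrightarrow> Z w = X w + Y w))
     = (\<lambda>Z. Z \<in> Cinf \<and> (\<forall>w\<in>U. Z w = ereal (h w)))" (is "?P = _")
    by (rule ext) (auto simp: U_def h_def ereal_real')
  have ex: "Ex1 ?P" by (subst eq) (rule ex1_Cinf[OF st U hc])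
  show ?thesis unfolding cadd_def by (rule theI'[OF ex])
qed

lemma cscale_spec:
  fixes X :: "'k::t2_space \<Rightarrow> ereal"
  assumes st: "stonean_space TYPE('k)" and X: "X \<in> Cinf"
  shows "cscale c X \<in> Cinf \<and> (\<forall>w. \<bar>X w\<bar> \<noteq> \<infinity> \<longrightarrow> cscale c X w = ereal c * X w)"
proof -
  define U where "U = {w. \<bar>X w\<bar> \<noteq> \<infinity>}"
  define h where "h w = c * real_of_ereal (X w)" for w
  have U: "open U" "closure U = UNIV" using Cinf_fin[OF X] unfolding U_def by auto
  have hc: "continuous_on U h" unfolding h_def
    by (intro continuous_on_mult continuous_on_const cont_roe[OF X]) (auto simp: U_def)
  have eq: "(\<lambda>Z. Z \<in> Cinf \<and> (\<forall>w. \<bar>X w\<bar> \<noteq> \<infinity> \<longrightarrow> Z w = ereal c * X w))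
     = (\<lambda>Z. Z \<in> Cinf \<and> (\<forall>w\<in>U. Z w = ereal (h w)))" (is "?P = _")
    by (rule ext) (auto simp: U_def h_def ereal_real')
  have ex: "Ex1 ?P" by (subst eq) (rule ex1_Cinf[OF st U hc])
  show ?thesis unfolding cscale_def by (rule theI'[OF ex])
qed

lemma fcalc_spec:
  fixes Xs :: "'n::finite \<Rightarrow> 'k::t2_space \<Rightarrow> ereal" and g :: "real^'n \<Rightarrow> real"
  assumes st: "stonean_space TYPE('k)" and X: "\<And>i. Xs i \<in> Cinf" and g: "continuous_on UNIV g"
  shows "fcalc g Xs \<in> Cinf \<and> (\<forall>w. (\<forall>i. \<bar>Xs i w\<bar> \<noteq> \<infinity>) \<longrightarrow> fcalc g Xs w = ereal (g (\<chi> i. real_of_ereal (Xs i w))))"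
proof -
  define U where "U = {w. \<forall>i. \<bar>Xs i w\<bar> \<noteq> \<infinity>}"
  have U2: "U = (\<Inter>i\<in>UNIV. {w. \<bar>Xs i w\<bar> \<noteq> \<infinity>})" unfolding U_def by (rule set_eqI) simp
  define h where "h w = g (\<chi> i. real_of_ereal (Xs i w))" for w
  have U: "open U" "closure U = UNIV" using dense_INT[of UNIV "\<lambda>i. {w. \<bar>Xs i w\<bar> \<noteq> \<infinity>}"] Cinf_fin[OF X] unfolding U2 by auto
  have Usub: "U \<subseteq> {w. \<bar>Xs i w\<bar> \<noteq> \<infinity>}" for i unfolding U2 by (rule INT_lower) simp
  have hc: "continuous_on U h" unfolding h_def
    by (rule continuous_on_compose2[OF g, of U "\<lambda>w. \<chi> i. real_of_ereal (Xs i w)", simplified])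
       (intro continuous_on_vec_lambda cont_roe[OF X Usub])
  have eq: "(\<lambda>Z. Z \<in> Cinf \<and> (\<forall>w. (\<forall>i. \<bar>Xs i w\<bar> \<noteq> \<infinity>) \<longrightarrow> Z w = ereal (g (\<chi> i. real_of_ereal (Xs i w)))))
     = (\<lambda>Z. Z \<in> Cinf \<and> (\<forall>w\<in>U. Z w = ereal (h w)))" (is "?P = _")
    by (rule ext) (simp add: U_def h_def)
  have ex: "Ex1 ?P" by (subst eq) (rule ex1_Cinf[OF st U hc])
  show ?thesis unfolding fcalc_def by (rule theI'[OF ex])
qed



lemma fin_ereal: "\<bar>x::ereal\<bar> \<noteq> \<infinity> \<Longrightarrow> x = ereal (real_of_ereal x)"
  by (simp add: ereal_real')

lemma Cinf_cont: "A \<in> Cinf \<Longrightarrow> continuous_on UNIV A" by (simp add: Cinf_def)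

lemma dense_Cs:
  fixes Cs :: "('k::topological_space \<Rightarrow> ereal) set"
  assumes "finite Cs" "Cs \<subseteq> Cinf"
  shows "closure {w. \<forall>C\<in>Cs. \<bar>C w\<bar> \<noteq> \<infinity>} = UNIV"
proof -
  have "{w. \<forall>C\<in>Cs. \<bar>C w\<bar> \<noteq> \<infinity>} = (\<Inter>C\<in>Cs. {w. \<bar>C w\<bar> \<noteq> \<infinity>})" by (rule set_eqI) simp
  moreover have "open (\<Inter>C\<in>Cs. {w. \<bar>C w\<bar> \<noteq> \<infinity>}) \<and> closure (\<Inter>C\<in>Cs. {w. \<bar>C w\<bar> \<noteq> \<infinity>}) = UNIV"
    by (rule dense_INT) (use assms Cinf_fin in auto)
  ultimately show ?thesis by simp
qed

lemma cscale_pt: fixes X :: "'k::t2_space \<Rightarrow> ereal" shows "stonean_space TYPE('k) \<Longrightarrow> X \<in> Cinf \<Longrightarrow> \<bar>X w\<bar> \<noteq> \<infinity> \<Longrightarrow> cscale c X w = ereal c * X w"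
  using cscale_spec[of X c] by auto

lemma cadd_pt: fixes X Y :: "'k::t2_space \<Rightarrow> ereal" shows "stonean_space TYPE('k) \<Longrightarrow> X \<in> Cinf \<Longrightarrow> Y \<in> Cinf \<Longrightarrow> \<bar>X w\<bar> \<noteq> \<infinity> \<Longrightarrow> \<bar>Y w\<bar> \<noteq> \<infinity> \<Longrightarrow> cadd X Y w = X w + Y w"
  using cadd_spec[of X Y] by auto


lemma le_Cs:
  fixes Cs :: "('k::topological_space \<Rightarrow> ereal) set"
  assumes "finite Cs" "Cs \<subseteq> Cinf" "A \<in> Cinf" "B \<in> Cinf"
    "\<And>w. \<forall>C\<in>Cs. \<bar>C w\<bar> \<noteq> \<infinity> \<Longrightarrow> A w \<le> B w"
  shows "A \<le> B"
  using cont_le_dense[OF Cinf_cont[OF assms(3)] Cinf_cont[OF assms(4)] dense_Cs[OF assms(1,2)]] assms(5) by blast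

lemma eq_Cs:
  fixes Cs :: "('k::topological_space \<Rightarrow> ereal) set"
  assumes "finite Cs" "Cs \<subseteq> Cinf" "A \<in> Cinf" "B \<in> Cinf"
    "\<And>w. \<forall>C\<in>Cs. \<bar>C w\<bar> \<noteq> \<infinity> \<Longrightarrow> A w = B w"
  shows "A = B"
  using cont_eq_dense[OF Cinf_cont[OF assms(3)] Cinf_cont[OF assms(4)] dense_Cs[OF assms(1,2)]] assms(5) by blast

lemma const_Cinf: "(\<lambda>_. ereal c) \<in> Cinf"
  by (rule Cinf_I[of _ UNIV]) auto

lemma MO_st: fixes E :: "('k::t2_space \<Rightarrow> ereal) set"
  shows "MO_space E \<Longrightarrow> stonean_space TYPE('k)" by (simp add: MO_space_def)

lemma MO_sub: "MO_space E \<Longrightarrow> X \<in> E \<Longrightarrow> X \<in> Cinf"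
  by (auto simp: MO_space_def)

lemma F_mono:
  fixes E :: "('k::t2_space \<Rightarrow> ereal) set"
  assumes MO: "MO_space E" and CE: "cond_exp E F" and A: "A \<in> E" and B: "B \<in> E" and le: "A \<le> B"
  shows "F A \<le> F B"
proof -
  have st: "stonean_space TYPE('k)" using MO_st[OF MO] .
  have EE: "\<And>X Y. X \<in> E \<Longrightarrow> Y \<in> E \<Longrightarrow> cadd X Y \<in> E" "\<And>c X. X \<in> E \<Longrightarrow> cscale c X \<in> E"
    using MO by (auto simp: MO_space_def)
  have FE: "\<And>X. X \<in> E \<Longrightarrow> F X \<in> E" using CE by (simp add: cond_exp_def)
  define mA where "mA = cscale (-1) A"
  define D where "D = cadd B mA"
  have mAE: "mA \<in> E" and DE: "D \<in> E" using EE A B by (auto simp: mA_def D_def)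
  have zC: "(\<lambda>_. 0::ereal) \<in> Cinf" using const_Cinf[of 0] by (simp add: zero_ereal_def)
  have "(\<lambda>_. 0) \<le> D"
  proof (rule le_Cs[of "{A, B, mA}"])
    show "{A, B, mA} \<subseteq> Cinf" using A B mAE MO_sub[OF MO] by auto
    show "D \<in> Cinf" using DE MO_sub[OF MO] by auto
    fix w assume "\<forall>C\<in>{A, B, mA}. \<bar>C w\<bar> \<noteq> \<infinity>"
    then have f: "\<bar>A w\<bar> \<noteq> \<infinity>" "\<bar>B w\<bar> \<noteq> \<infinity>" "\<bar>mA w\<bar> \<noteq> \<infinity>" by auto
    have "mA w = ereal (-1) * A w" unfolding mA_def by (rule cscale_pt[OF st MO_sub[OF MO A] f(1)])
    moreover have "D w = B w + mA w" unfolding D_def by (rule cadd_pt[OF st MO_sub[OF MO B] MO_sub[OF MO mAE] f(2,3)])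
    moreover have "A w \<le> B w" using le by (simp add: le_fun_def)
    ultimately show "0 \<le> D w" using f fin_ereal[of "A w"] fin_ereal[of "B w"]
      by (cases "A w"; cases "B w") auto
  qed (use zC in auto)
  then have FD: "(\<lambda>_. 0) \<le> F D" using CE DE by (simp add: cond_exp_def)
  have FD2: "F D = cadd (F B) (cscale (-1) (F A))"
    using CE A B mAE by (simp add: cond_exp_def D_def mA_def)
  have FAC: "F A \<in> Cinf" "F B \<in> Cinf" using FE A B MO_sub[OF MO] by auto
  have mFA: "cscale (-1) (F A) \<in> Cinf" using cscale_spec[OF st FAC(1)] by blast
  show ?thesis
  proof (rule le_Cs[of "{F A, F B, cscale (-1) (F A)}"])
    fix w assume "\<forall>C\<in>{F A, F B, cscale (-1) (F A)}. \<bar>C w\<bar> \<noteq> \<infinity>"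
    then have f: "\<bar>F A w\<bar> \<noteq> \<infinity>" "\<bar>F B w\<bar> \<noteq> \<infinity>" "\<bar>cscale (-1) (F A) w\<bar> \<noteq> \<infinity>" by auto
    have "cscale (-1) (F A) w = ereal (-1) * F A w" by (rule cscale_pt[OF st FAC(1) f(1)])
    moreover have "F D w = F B w + cscale (-1) (F A) w" using cadd_pt[OF st FAC(2) mFA] f FD2 by simp
    moreover have "0 \<le> F D w" using FD by (simp add: le_fun_def)
    ultimately show "F A w \<le> F B w" using f
      by (cases "F A w"; cases "F B w") auto
  qed (use FAC mFA in auto)
qed

lemma cscale_C: fixes X :: "'k::t2_space \<Rightarrow> ereal" shows "stonean_space TYPE('k) \<Longrightarrow> X \<in> Cinf \<Longrightarrow> cscale c X \<in> Cinf"
  by (rule conjunct1[OF cscale_spec])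

lemma cadd_C: fixes X Y :: "'k::t2_space \<Rightarrow> ereal" shows "stonean_space TYPE('k) \<Longrightarrow> X \<in> Cinf \<Longrightarrow> Y \<in> Cinf \<Longrightarrow> cadd X Y \<in> Cinf"
  by (rule conjunct1[OF cadd_spec])



lemma affine_minorant:
  fixes g :: "real^'n \<Rightarrow> real"
  assumes gc: "continuous_on UNIV g" and gv: "convex_on UNIV g" and e: "e > 0"
  shows "\<exists>a b. (\<forall>y. b + inner a y \<le> g y) \<and> g x - e \<le> b + inner a x"
proof -
  define S where "S = epigraph UNIV g"
  have cS: "convex S" unfolding S_def using gv by (simp add: convex_epigraph)
  have S2: "S = {p. g (fst p) \<le> snd p}" unfolding S_def epigraph_def by simp
  have c1: "continuous_on UNIV (\<lambda>p::((real^'n) \<times> real). g (fst p))"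
    by (rule continuous_on_compose2[OF gc]) (auto intro: continuous_intros)
  have c2: "continuous_on UNIV (\<lambda>p::((real^'n) \<times> real). snd p)"
    by (intro continuous_intros)
  have clS: "closed S" unfolding S2 using closed_Collect_le[OF c1 c2] by simp
  have zS: "(x, g x - e) \<notin> S" using e unfolding S2 by simp
  obtain c d where cd: "inner c (x, g x - e) < d" "\<forall>p\<in>S. inner c p > d"
    using separating_hyperplane_closed_point[OF cS clS zS] by blast
  obtain a' c0 where c: "c = (a', c0)" by (cases c)
  have gS: "(y, g y) \<in> S" for y unfolding S2 by simp
  have H: "inner a' y + c0 * g y > d" for y using cd(2) gS[of y] unfolding c by auto
  have Hx: "inner a' x + c0 * (g x - e) < d" using cd(1) unfolding c by simp
  have "c0 * e > 0" using H[of x] Hx by (simp add: algebra_simps)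
  then have c0: "c0 > 0" using e by (simp add: zero_less_mult_iff)
  define a where "a = (- (1/c0)) *\<^sub>R a'"
  define b where "b = d / c0"
  have lin: "b + inner a y = (d - inner a' y) / c0" for y
    unfolding a_def b_def by (simp add: diff_divide_distrib)
  have "b + inner a y \<le> g y" for y
  proof -
    have "d - inner a' y < c0 * g y" using H[of y] by simp
    then have "(d - inner a' y) / c0 < g y" using c0 by (simp add: divide_less_eq mult.commute)
    then show ?thesis using lin by simp
  qed
  moreover have "g x - e \<le> b + inner a x"
  proof -
    have "c0 * (g x - e) < d - inner a' x" using Hx by simp
    then have "g x - e < (d - inner a' x) / c0" using c0 by (simp add: less_divide_eq mult.commute)
    then show ?thesis using lin by simp
  qed
  ultimately show ?thesis by blast
qed



lemma fcalc_base:
  fixes Xs :: "'n::finite \<Rightarrow> 'k::t2_space \<Rightarrow> ereal"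
  assumes st: "stonean_space TYPE('k)" and X: "\<And>i. Xs i \<in> Cinf"
  shows "fcalc (\<lambda>y::real^'n. b + (\<Sum>i\<in>{}. a$i * y$i)) Xs = cscale b (\<lambda>_. 1)"
proof -
  have oC: "((\<lambda>_. 1) :: 'k \<Rightarrow> ereal) \<in> Cinf" using const_Cinf[of 1] by (simp add: one_ereal_def)
  have c: "continuous_on UNIV (\<lambda>y::real^'n. b + (\<Sum>i\<in>{}. a$i * y$i))" by simp
  note fs = fcalc_spec[OF st X c]
  show ?thesis
  proof (rule eq_Cs[of "range Xs"])
    show "cscale b ((\<lambda>_. 1) :: 'k \<Rightarrow> ereal) \<in> Cinf" by (rule cscale_C[OF st oC])
    fix w assume "\<forall>C\<in>range Xs. \<bar>C w\<bar> \<noteq> \<infinity>"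
    then have "\<forall>i. \<bar>Xs i w\<bar> \<noteq> \<infinity>" by auto
    then have "fcalc (\<lambda>y::real^'n. b + (\<Sum>i\<in>{}. a$i * y$i)) Xs w = ereal b" using fs by auto
    moreover have "cscale b ((\<lambda>_. 1) :: 'k \<Rightarrow> ereal) w = ereal b * 1" by (rule cscale_pt[OF st oC]) simp
    ultimately show "fcalc (\<lambda>y::real^'n. b + (\<Sum>i\<in>{}. a$i * y$i)) Xs w = cscale b (\<lambda>_. 1) w" by simp
  qed (use X fs in \<open>auto simp: image_subset_iff\<close>)
qed

lemma fcalc_step:
  fixes Xs :: "'n::finite \<Rightarrow> 'k::t2_space \<Rightarrow> ereal"
  assumes st: "stonean_space TYPE('k)" and X: "\<And>i. Xs i \<in> Cinf" and j: "j \<notin> S"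
  shows "fcalc (\<lambda>y::real^'n. b + (\<Sum>i\<in>insert j S. a$i * y$i)) Xs
       = cadd (fcalc (\<lambda>y::real^'n. b + (\<Sum>i\<in>S. a$i * y$i)) Xs) (cscale (a$j) (Xs j))"
proof -
  have fS: "finite S" by simp
  have c1: "continuous_on UNIV (\<lambda>y::real^'n. b + (\<Sum>i\<in>insert j S. a$i * y$i))"
    by (intro continuous_intros)
  have c2: "continuous_on UNIV (\<lambda>y::real^'n. b + (\<Sum>i\<in>S. a$i * y$i))"
    by (intro continuous_intros)
  note f1 = fcalc_spec[OF st X c1] and f2 = fcalc_spec[OF st X c2]
  define P where "P = fcalc (\<lambda>y::real^'n. b + (\<Sum>i\<in>S. a$i * y$i)) Xs"
  define Q where "Q = cscale (a$j) (Xs j)"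
  have PC: "P \<in> Cinf" using f2 by (simp add: P_def)
  have QC: "Q \<in> Cinf" unfolding Q_def by (rule cscale_C[OF st X])
  show ?thesis unfolding P_def[symmetric] Q_def[symmetric]
  proof (rule eq_Cs[of "insert P (insert Q (range Xs))"])
    show "cadd P Q \<in> Cinf" by (rule cadd_C[OF st PC QC])
    fix w assume "\<forall>C\<in>insert P (insert Q (range Xs)). \<bar>C w\<bar> \<noteq> \<infinity>"
    then have f: "\<forall>i. \<bar>Xs i w\<bar> \<noteq> \<infinity>" "\<bar>P w\<bar> \<noteq> \<infinity>" "\<bar>Q w\<bar> \<noteq> \<infinity>" by auto
    have "cadd P Q w = P w + Q w" using cadd_pt[OF st PC QC f(2,3)] .
    also have "P w = ereal (b + (\<Sum>i\<in>S. a$i * real_of_ereal (Xs i w)))"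
      using f2 f(1) by (simp add: P_def)
    also have "Q w = ereal (a$j) * Xs j w" unfolding Q_def by (rule cscale_pt[OF st X]) (use f in auto)
    also have "Xs j w = ereal (real_of_ereal (Xs j w))" using f(1) by (rule_tac fin_ereal) simp
    finally have "cadd P Q w = ereal (b + (\<Sum>i\<in>S. a$i * real_of_ereal (Xs i w))) + ereal (a$j) * ereal (real_of_ereal (Xs j w))" .
    also have "\<dots> = ereal (b + (\<Sum>i\<in>insert j S. a$i * real_of_ereal (Xs i w)))"
      using j fS by (simp add: sum.insert)
    finally have "cadd P Q w = ereal (b + (\<Sum>i\<in>insert j S. a$i * real_of_ereal (Xs i w)))" .
    moreover have "fcalc (\<lambda>y::real^'n. b + (\<Sum>i\<in>insert j S. a$i * y$i)) Xs w
        = ereal (b + (\<Sum>i\<in>insert j S. a$i * real_of_ereal (Xs i w)))" using f1 f(1) by simp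
    ultimately show "fcalc (\<lambda>y::real^'n. b + (\<Sum>i\<in>insert j S. a$i * y$i)) Xs w = cadd P Q w" by simp
  qed (use X f1 PC QC in \<open>simp_all add: image_subset_iff\<close>)
qed



lemma basic_facts:
  fixes E :: "('k::t2_space \<Rightarrow> ereal) set" and FF :: "nat \<Rightarrow> ('k \<Rightarrow> ereal) \<Rightarrow> ('k \<Rightarrow> ereal)"
    and X :: "'n::finite \<Rightarrow> nat \<Rightarrow> 'k \<Rightarrow> ereal"
  assumes FILT: "filtration E FF" and MART: "\<And>i. martingale E FF (X i)"
  shows "\<And>t. cond_exp E (FF t)" "\<And>i t. X i t \<in> E" "\<And>i t s. t \<le> s \<Longrightarrow> FF t (X i s) = X i t"
proof -
  show "\<And>t. cond_exp E (FF t)" using FILT by (simp add: filtration_def)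
  show "\<And>i t. X i t \<in> E" using MART by (simp add: martingale_def submartingale_def adapted_def)
  fix i t s assume "t \<le> (s::nat)"
  then have "X i t \<le> FF t (X i s)" "FF t (X i s) \<le> X i t" using MART[of i]
    by (auto simp: martingale_def submartingale_def supermartingale_def)
  then show "FF t (X i s) = X i t" by (rule antisym[rotated])
qed

lemma affine_mart:
  fixes E :: "('k::t2_space \<Rightarrow> ereal) set" and FF :: "nat \<Rightarrow> ('k \<Rightarrow> ereal) \<Rightarrow> ('k \<Rightarrow> ereal)"
    and X :: "'n::finite \<Rightarrow> nat \<Rightarrow> 'k \<Rightarrow> ereal" and a :: "real^'n"
  assumes MO: "MO_space E" and FILT: "filtration E FF" and MART: "\<And>i. martingale E FF (X i)"
    and fS: "finite S"
  shows "\<forall>s. fcalc (\<lambda>y::real^'n. b + (\<Sum>i\<in>S. a$i * y$i)) (\<lambda>i. X i s) \<in> E \<and>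
      (\<forall>t. t \<le> s \<longrightarrow> FF t (fcalc (\<lambda>y::real^'n. b + (\<Sum>i\<in>S. a$i * y$i)) (\<lambda>i. X i s))
            = fcalc (\<lambda>y::real^'n. b + (\<Sum>i\<in>S. a$i * y$i)) (\<lambda>i. X i t))"
  using fS
proof (induction S rule: finite_induct)
  have st: "stonean_space TYPE('k)" using MO_st[OF MO] .
  note bf = basic_facts[of E FF X, OF FILT MART]
  have XC: "\<And>i t. X i t \<in> Cinf" by (rule MO_sub[OF MO bf(2)])
  have EE: "\<And>X Y. X \<in> E \<Longrightarrow> Y \<in> E \<Longrightarrow> cadd X Y \<in> E" "\<And>c X. X \<in> E \<Longrightarrow> cscale c X \<in> E"
    "((\<lambda>_. 1) :: 'k \<Rightarrow> ereal) \<in> E"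
    using MO by (auto simp: MO_space_def)
  {
    case empty
    show ?case
    proof (intro allI conjI impI)
      fix s
      show "fcalc (\<lambda>y::real^'n. b + (\<Sum>i\<in>{}. a$i * y$i)) (\<lambda>i. X i s) \<in> E"
        unfolding fcalc_base[OF st XC] by (rule EE(2)[OF EE(3)])
      fix t assume "t \<le> s"
      have "FF t (cscale b (\<lambda>_. 1)) = cscale b (FF t (\<lambda>_. 1))"
        using bf(1)[of t] EE(3) by (simp add: cond_exp_def)
      also have "FF t (\<lambda>_. 1) = (\<lambda>_. 1)" using bf(1)[of t] by (simp add: cond_exp_def)
      finally show "FF t (fcalc (\<lambda>y::real^'n. b + (\<Sum>i\<in>{}. a$i * y$i)) (\<lambda>i. X i s))
            = fcalc (\<lambda>y::real^'n. b + (\<Sum>i\<in>{}. a$i * y$i)) (\<lambda>i. X i t)"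
        unfolding fcalc_base[OF st XC] .
    qed
  next
    case (insert j S)
    show ?case
    proof (intro allI conjI impI)
      fix s
      have P: "fcalc (\<lambda>y::real^'n. b + (\<Sum>i\<in>S. a$i * y$i)) (\<lambda>i. X i s) \<in> E" using insert.IH by simp
      show "fcalc (\<lambda>y::real^'n. b + (\<Sum>i\<in>insert j S. a$i * y$i)) (\<lambda>i. X i s) \<in> E"
        unfolding fcalc_step[OF st XC insert.hyps(2)]
        by (intro EE(1)[OF P] EE(2) bf(2))
      fix t assume ts: "t \<le> s"
      have "FF t (cadd (fcalc (\<lambda>y::real^'n. b + (\<Sum>i\<in>S. a$i * y$i)) (\<lambda>i. X i s)) (cscale (a$j) (X j s)))
          = cadd (FF t (fcalc (\<lambda>y::real^'n. b + (\<Sum>i\<in>S. a$i * y$i)) (\<lambda>i. X i s))) (FF t (cscale (a$j) (X j s)))"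
        using bf(1)[of t] P EE(2) bf(2) by (simp add: cond_exp_def)
      also have "FF t (fcalc (\<lambda>y::real^'n. b + (\<Sum>i\<in>S. a$i * y$i)) (\<lambda>i. X i s))
          = fcalc (\<lambda>y::real^'n. b + (\<Sum>i\<in>S. a$i * y$i)) (\<lambda>i. X i t)" using insert.IH ts by simp
      also have "FF t (cscale (a$j) (X j s)) = cscale (a$j) (FF t (X j s))"
        using bf(1)[of t] bf(2) by (simp add: cond_exp_def)
      also have "FF t (X j s) = X j t" using bf(3) ts by simp
      finally show "FF t (fcalc (\<lambda>y::real^'n. b + (\<Sum>i\<in>insert j S. a$i * y$i)) (\<lambda>i. X i s))
            = fcalc (\<lambda>y::real^'n. b + (\<Sum>i\<in>insert j S. a$i * y$i)) (\<lambda>i. X i t)"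
        unfolding fcalc_step[OF st XC insert.hyps(2)] .
    qed
  }
qed



theorem mainTheorem10:
  fixes E :: "('k::t2_space \<Rightarrow> ereal) set"
    and FF :: "nat \<Rightarrow> ('k \<Rightarrow> ereal) \<Rightarrow> ('k \<Rightarrow> ereal)"
    and X :: "'n::finite \<Rightarrow> nat \<Rightarrow> 'k \<Rightarrow> ereal"
    and g :: "real^'n \<Rightarrow> real"
  assumes "MO_space E"
    and "filtration E FF"
    and "\<And>i. martingale E FF (X i)"
    and "continuous_on UNIV g"
    and "convex_on UNIV g"
    and "\<And>t. fcalc g (\<lambda>i. X i t) \<in> E"
  shows "submartingale E FF (\<lambda>t. fcalc g (\<lambda>i. X i t))"
proof -
  note MO = assms(1) and FILT = assms(2) and MART = assms(3) and gc = assms(4) and gv = assms(5)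
  define Y where "Y t = fcalc g (\<lambda>i. X i t)" for t
  have YE: "Y t \<in> E" for t using assms(6) by (simp add: Y_def)
  have st: "stonean_space TYPE('k)" using MO_st[OF MO] .
  note bf = basic_facts[of E FF X, OF FILT MART]
  have XC: "\<And>i t. X i t \<in> Cinf" by (rule MO_sub[OF MO bf(2)])
  have EE: "\<And>X Y. X \<in> E \<Longrightarrow> Y \<in> E \<Longrightarrow> cadd X Y \<in> E" "\<And>c X. X \<in> E \<Longrightarrow> cscale c X \<in> E"
    using MO by (auto simp: MO_space_def)
  have FE: "\<And>t Z. Z \<in> E \<Longrightarrow> FF t Z \<in> E" using bf(1) by (simp add: cond_exp_def)
  have YC: "Y t \<in> Cinf" for t using MO_sub[OF MO YE] .
  have Yv: "\<And>t w. \<forall>i. \<bar>X i t w\<bar> \<noteq> \<infinity> \<Longrightarrow> Y t w = ereal (g (\<chi> i. real_of_ereal (X i t w)))"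
    unfolding Y_def using fcalc_spec[OF st XC gc] by simp
  have finr: "finite (range (\<lambda>i. X i t))" for t by simp
  have rC: "range (\<lambda>i. X i t) \<subseteq> Cinf" for t using XC by auto
  have sub: "Y t \<le> FF t (Y s)" if ts: "t \<le> s" for t s
  proof (rule le_Cs[OF finr rC YC MO_sub[OF MO FE[OF YE]]])
    fix w assume "\<forall>C\<in>range (\<lambda>i. X i t). \<bar>C w\<bar> \<noteq> \<infinity>"
    then have fw: "\<forall>i. \<bar>X i t w\<bar> \<noteq> \<infinity>" by simp
    define x where "x = (\<chi> i. real_of_ereal (X i t w))"
    have "ereal (g x) \<le> FF t (Y s) w"
    proof (rule ccontr)
      assume "\<not> ereal (g x) \<le> FF t (Y s) w"
      then have "FF t (Y s) w < ereal (g x)" by simp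
      then obtain z where z: "FF t (Y s) w < ereal z" "ereal z < ereal (g x)" using ereal_dense2 by blast
      define e where "e = g x - z"
      have e: "e > 0" using z by (simp add: e_def)
      obtain a b where ab: "\<forall>y. b + inner a y \<le> g y" "g x - e \<le> b + inner a x"
        using affine_minorant[OF gc gv e] by blast
      define l where "l = (\<lambda>y::real^'n. b + (\<Sum>i\<in>UNIV. a$i * y$i))"
      have inn: "inner a y = (\<Sum>i\<in>UNIV. a$i * y$i)" for y :: "real^'n"
        by (simp add: inner_vec_def)
      have l1: "l y \<le> g y" for y using ab(1) by (simp add: l_def inn)
      have l2: "g x - e \<le> l x" using ab(2) by (simp add: l_def inn)
      have lc: "continuous_on UNIV l" unfolding l_def by (intro continuous_intros)
      note am = affine_mart[OF MO FILT MART, of UNIV b a, folded l_def, simplified]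
      define L where "L r = fcalc l (\<lambda>i. X i r)" for r
      have LE: "L r \<in> E" for r using am by (simp add: L_def)
      have LF: "FF t (L s) = L t" using am ts by (simp add: L_def)
      have Lv: "\<And>r w. \<forall>i. \<bar>X i r w\<bar> \<noteq> \<infinity> \<Longrightarrow> L r w = ereal (l (\<chi> i. real_of_ereal (X i r w)))"
        unfolding L_def using fcalc_spec[OF st XC lc] by simp
      have "L s \<le> Y s"
      proof (rule le_Cs[OF finr rC MO_sub[OF MO LE] YC])
        fix w' assume "\<forall>C\<in>range (\<lambda>i. X i s). \<bar>C w'\<bar> \<noteq> \<infinity>"
        then have "\<forall>i. \<bar>X i s w'\<bar> \<noteq> \<infinity>" by simp
        then show "L s w' \<le> Y s w'" using Lv Yv l1 by simp
      qed
      then have "FF t (L s) \<le> FF t (Y s)" by (rule F_mono[OF MO bf(1) LE YE])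
      then have "L t w \<le> FF t (Y s) w" unfolding LF by (simp add: le_fun_def)
      moreover have "L t w = ereal (l x)" using Lv[OF fw] by (simp add: x_def)
      moreover have "z \<le> l x" using l2 by (simp add: e_def)
      ultimately have "ereal z \<le> FF t (Y s) w" using order_trans[of "ereal z" "ereal (l x)"] by simp
      then show False using z(1) by simp
    qed
    then show "Y t w \<le> FF t (Y s) w" using Yv[OF fw] by (simp add: x_def)
  qed
  have adapt: "Y t \<in> FF t ` E" for t
  proof -
    define FY where "FY = FF t (Y t)"
    have FYE: "FY \<in> E" using FE[OF YE] by (simp add: FY_def)
    have FYC: "FY \<in> Cinf" using MO_sub[OF MO FYE] .
    have le: "Y t \<le> FY" using sub[of t t] by (simp add: FY_def)
    define mY where "mY = cscale (-1) (Y t)"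
    have mYE: "mY \<in> E" unfolding mY_def by (rule EE(2)[OF YE])
    have mYC: "mY \<in> Cinf" using MO_sub[OF MO mYE] .
    define D where "D = cadd FY mY"
    have DE: "D \<in> E" unfolding D_def by (rule EE(1)[OF FYE mYE])
    have DC: "D \<in> Cinf" using MO_sub[OF MO DE] .
    have zC: "((\<lambda>_. 0) :: 'k \<Rightarrow> ereal) \<in> Cinf" using const_Cinf[of 0] by (simp add: zero_ereal_def)
    have Dv: "D w = FY w - Y t w" if "\<bar>FY w\<bar> \<noteq> \<infinity>" "\<bar>Y t w\<bar> \<noteq> \<infinity>" "\<bar>mY w\<bar> \<noteq> \<infinity>" for w
    proof -
      have "D w = FY w + mY w" unfolding D_def by (rule cadd_pt[OF st FYC mYC that(1,3)])
      moreover have "mY w = ereal (-1) * Y t w" unfolding mY_def by (rule cscale_pt[OF st YC that(2)])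
      ultimately show ?thesis using that(1,2) by (cases "FY w"; cases "Y t w") auto
    qed
    have D0: "(\<lambda>_. 0) \<le> D"
    proof (rule le_Cs[of "{FY, Y t, mY}"])
      fix w assume "\<forall>C\<in>{FY, Y t, mY}. \<bar>C w\<bar> \<noteq> \<infinity>"
      then have f: "\<bar>FY w\<bar> \<noteq> \<infinity>" "\<bar>Y t w\<bar> \<noteq> \<infinity>" "\<bar>mY w\<bar> \<noteq> \<infinity>" by auto
      have "Y t w \<le> FY w" using le by (simp add: le_fun_def)
      then show "0 \<le> D w" using Dv[OF f] f(1,2) by (cases "FY w"; cases "Y t w") auto
    qed (use FYC YC mYC zC DC in auto)
    have FD: "FF t D = cadd FY (cscale (-1) FY)"
    proof -
      have "FF t D = cadd (FF t FY) (cscale (-1) (FF t (Y t)))"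
        using bf(1)[of t] FYE YE mYE unfolding D_def mY_def by (simp add: cond_exp_def)
      also have "FF t FY = FY" using bf(1)[of t] YE unfolding FY_def by (simp add: cond_exp_def)
      finally show ?thesis by (simp add: FY_def)
    qed
    have mFYC: "cscale (-1) FY \<in> Cinf" by (rule cscale_C[OF st FYC])
    have "FF t D = (\<lambda>_. 0)" unfolding FD
    proof (rule eq_Cs[of "{FY, cscale (-1) FY}"])
      fix w assume "\<forall>C\<in>{FY, cscale (-1) FY}. \<bar>C w\<bar> \<noteq> \<infinity>"
      then have f: "\<bar>FY w\<bar> \<noteq> \<infinity>" "\<bar>cscale (-1) FY w\<bar> \<noteq> \<infinity>" by auto
      have "cadd FY (cscale (-1) FY) w = FY w + cscale (-1) FY w" by (rule cadd_pt[OF st FYC mFYC f])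
      moreover have "cscale (-1) FY w = ereal (-1) * FY w" by (rule cscale_pt[OF st FYC f(1)])
      ultimately show "cadd FY (cscale (-1) FY) w = 0" using f(1) by (cases "FY w") auto
    qed (use FYC mFYC zC cadd_C[OF st FYC mFYC] in auto)
    then have "D = (\<lambda>_. 0)" using bf(1)[of t] DE D0 unfolding cond_exp_def by blast
    have "FY = Y t"
    proof (rule eq_Cs[of "{FY, Y t, mY}"])
      fix w assume "\<forall>C\<in>{FY, Y t, mY}. \<bar>C w\<bar> \<noteq> \<infinity>"
      then have f: "\<bar>FY w\<bar> \<noteq> \<infinity>" "\<bar>Y t w\<bar> \<noteq> \<infinity>" "\<bar>mY w\<bar> \<noteq> \<infinity>" by auto
      have "D w = 0" using \<open>D = (\<lambda>_. 0)\<close> by simp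
      then show "FY w = Y t w" using Dv[OF f] f(1,2) by (cases "FY w"; cases "Y t w") auto
    qed (use FYC YC mYC in auto)
    then show ?thesis using YE unfolding FY_def by (metis image_eqI)
  qed
  show ?thesis unfolding submartingale_def adapted_def
    using YE adapt sub by (simp add: Y_def)
qed

end
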